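(* In the setting of the symmetric stochastic game with program $\mathcal P_{SS}(\lambda;\Pi)$, let $\underline z<\bar z$ with $-k_{SS}(-1;\Pi)<\underline z<\bar z<k_{SS}(+1;\Pi)$ and $Z=[\underline z,\bar z]$. Let $\epsilon_0>0$ and, for each $\lambda\in\{-1,+1\}$, let $(v^\lambda,x^\lambda)$ (together with some $(\alpha^\lambda_s)_s$) be feasible in $\mathcal P_{SS}(\lambda;\Pi)$ with $v^{-1}+\epsilon_0<z<v^{+1}-\epsilon_0$ for all $z\in Z$. Let $\kappa_0=\max\{\max_{\lambda,s,t,y}|x^\lambda_s(t,y)|,\ \max_{\lambda,z\in Z}|z-v^\lambda|\}$, let $n\in\mathbb N$ satisfy $\epsilon_0\frac{n-1}{2}-2\kappa_0|S|>0$, and let $\bar\delta<1$ be such that for all $\delta\ge\bar\delta$: $(n/2)^2(1-\delta)\le|S|$ and $1-\delta^{n-1}\ge(n-1)(1-\delta)/2$. Then for every $\lambda\in\{-1,+1\}$, every $z\in Z$ and every $\delta\ge\bar\delta$ there exists $w:H^n\to\mathbb R$ such that (1) for every $s\in S$, $z$ is an SSE payoff of the game $\Gamma^n(s,w;\delta)$, and (2) $\lambda w(h)<\lambda z$ for every $h\in H^n$.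
   Context: Setting: finite set of players $I$, finite state set $S$, common finite action set $B$, finite public signal set $Y$; $p(t,y\mid s,a)$ is the probability of next state $t$ and public signal $y$ given state $s$ and action profile $a$; $u(\alpha,s)$ is each player's payoff when all play $\alpha\in\Delta(B)$ at $s$. The program $\mathcal P_{SS}(\lambda;\Pi)$, $\lambda\in\{-1,+1\}$: maximize $\lambda v$ over $v\in\mathbb R$, $(\alpha_s)_s\in\Delta(B)^{|S|}$, $x=(x_s(t,y))$ subject to (a) $v=u(\alpha_s,s)+\sum_{(t,y)}x_s(t,y)p(t,y\mid s,\alpha_s)$ for all $s$; (b) $v\ge u_i((b,\alpha_{s,-i}),s)+\sum_{(t,y)}x_s(t,y)p(t,y\mid s,(b,\alpha_{s,-i}))$ for all $s,i$ and $b\in B$; (c) $\lambda\sum_{s\in T}x_s(\xi(s),\psi(s))\le0$ for all $T\subseteq S$, permutations $\xi$ of $T$, and $\psi:T\to Y$; its value is $k_{SS}(\lambda;\Pi)$. $H^n$ is the set of public histories $h^n=(s^1,y^1,s^2,y^2,\dots,s^{n-1},y^{n-1},s^n)$ of length $n$. $\Gamma^n(s,w;\delta)$ is the $(n-1)$-stage game starting at state $s$ in which a player's payoff is $(1-\delta)\sum_{k=1}^{n-1}\delta^{k-1}u_i(a^k,s^k)+\delta^{n-1}w(h^n)$; an SSE of it is a strongly symmetric public-strategy equilibrium. *)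

theory Defs
  imports "HOL-Analysis.Analysis" "HOL-Combinatorics.Permutations" "HOL-Library.Extended_Real"
begin

(* Players: finite type 'i; states: finite type 's; actions: finite type 'b;
   public signals: finite type 'y.
   u i a s : payoff of player i at state s under pure action profile a :: 'i => 'b.
   p s a t y : probability of next state t and signal y at state s under profile a. *)

definition mixed_actions :: "('b::finite \<Rightarrow> real) set" where
  "mixed_actions = {\<alpha>. (\<forall>b. 0 \<le> \<alpha> b) \<and> sum \<alpha> UNIV = 1}"

definition prof_prob :: "('i::finite \<Rightarrow> 'b::finite \<Rightarrow> real) \<Rightarrow> ('i \<Rightarrow> 'b) \<Rightarrow> real" where
  "prof_prob \<alpha>s a = (\<Prod>j\<in>UNIV. \<alpha>s j (a j))"

definition sym_prof :: "('b \<Rightarrow> real) \<Rightarrow> 'i \<Rightarrow> 'b \<Rightarrow> real" where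
  "sym_prof \<alpha> = (\<lambda>_. \<alpha>)"

definition dev_prof :: "'i \<Rightarrow> 'b \<Rightarrow> ('b \<Rightarrow> real) \<Rightarrow> 'i \<Rightarrow> 'b \<Rightarrow> real" where
  "dev_prof i b \<alpha> = (\<lambda>j. if j = i then (\<lambda>c. if c = b then 1 else 0) else \<alpha>)"

definition exp_u :: "('i::finite \<Rightarrow> ('i \<Rightarrow> 'b::finite) \<Rightarrow> 's \<Rightarrow> real) \<Rightarrow> 'i \<Rightarrow> ('i \<Rightarrow> 'b \<Rightarrow> real) \<Rightarrow> 's \<Rightarrow> real" where
  "exp_u u i \<alpha>s s = (\<Sum>a\<in>UNIV. prof_prob \<alpha>s a * u i a s)"

definition exp_p :: "('s \<Rightarrow> ('i::finite \<Rightarrow> 'b::finite) \<Rightarrow> 's \<Rightarrow> 'y \<Rightarrow> real) \<Rightarrow> 's \<Rightarrow> ('i \<Rightarrow> 'b \<Rightarrow> real) \<Rightarrow> 's \<Rightarrow> 'y \<Rightarrow> real" where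
  "exp_p p s \<alpha>s t y = (\<Sum>a\<in>UNIV. prof_prob \<alpha>s a * p s a t y)"

definition sym_stoch_game :: "('i::finite \<Rightarrow> ('i \<Rightarrow> 'b::finite) \<Rightarrow> 's::finite \<Rightarrow> real)
    \<Rightarrow> ('s \<Rightarrow> ('i \<Rightarrow> 'b) \<Rightarrow> 's \<Rightarrow> 'y::finite \<Rightarrow> real) \<Rightarrow> bool" where
  "sym_stoch_game u p \<longleftrightarrow>
     (\<forall>s a t y. 0 \<le> p s a t y) \<and>
     (\<forall>s a. (\<Sum>(t, y)\<in>UNIV. p s a t y) = 1) \<and>
     (\<forall>\<pi>. bij \<pi> \<longrightarrow>
        (\<forall>s a t y. p s (a \<circ> \<pi>) t y = p s a t y) \<and>
        (\<forall>i a s. u (inv \<pi> i) (a \<circ> \<pi>) s = u i a s))"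

text \<open>Feasibility in the program P_SS(lambda; Pi). Constraint (a) is imposed for every player i
  (under symmetry u_i(alpha,...,alpha,s) does not depend on i).\<close>
definition PSS_feasible :: "('i::finite \<Rightarrow> ('i \<Rightarrow> 'b::finite) \<Rightarrow> 's::finite \<Rightarrow> real)
    \<Rightarrow> ('s \<Rightarrow> ('i \<Rightarrow> 'b) \<Rightarrow> 's \<Rightarrow> 'y::finite \<Rightarrow> real) \<Rightarrow> real
    \<Rightarrow> real \<Rightarrow> ('s \<Rightarrow> 'b \<Rightarrow> real) \<Rightarrow> ('s \<Rightarrow> 's \<Rightarrow> 'y \<Rightarrow> real) \<Rightarrow> bool" where
  "PSS_feasible u p lam v \<alpha> x \<longleftrightarrow>
     (\<forall>s. \<alpha> s \<in> mixed_actions) \<and>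
     (\<forall>s i. v = exp_u u i (sym_prof (\<alpha> s)) s
                + (\<Sum>(t, y)\<in>UNIV. x s t y * exp_p p s (sym_prof (\<alpha> s)) t y)) \<and>
     (\<forall>s i b. v \<ge> exp_u u i (dev_prof i b (\<alpha> s)) s
                + (\<Sum>(t, y)\<in>UNIV. x s t y * exp_p p s (dev_prof i b (\<alpha> s)) t y)) \<and>
     (\<forall>T \<xi> (\<psi> :: 's \<Rightarrow> 'y). \<xi> permutes T \<longrightarrow> lam * (\<Sum>s\<in>T. x s (\<xi> s) (\<psi> s)) \<le> 0)"

definition kSS :: "('i::finite \<Rightarrow> ('i \<Rightarrow> 'b::finite) \<Rightarrow> 's::finite \<Rightarrow> real)
    \<Rightarrow> ('s \<Rightarrow> ('i \<Rightarrow> 'b) \<Rightarrow> 's \<Rightarrow> 'y::finite \<Rightarrow> real) \<Rightarrow> real \<Rightarrow> ereal" where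
  "kSS u p lam = (SUP vax \<in> {(v, \<alpha>, x). PSS_feasible u p lam v \<alpha> x}. ereal (lam * fst vax))"

text \<open>Public histories: ([(s^1,y^1),...,(s^{k-1},y^{k-1})], s^k); length k = length of list + 1.\<close>
type_synonym ('s, 'y) hist = "('s \<times> 'y) list \<times> 's"

text \<open>Normalized continuation payoff of player i when all use public strategy sigma,
  with m stages remaining and terminal payoff w.\<close>
fun eq_val :: "('i::finite \<Rightarrow> ('i \<Rightarrow> 'b::finite) \<Rightarrow> 's::finite \<Rightarrow> real)
    \<Rightarrow> ('s \<Rightarrow> ('i \<Rightarrow> 'b) \<Rightarrow> 's \<Rightarrow> 'y::finite \<Rightarrow> real) \<Rightarrow> real
    \<Rightarrow> (('s, 'y) hist \<Rightarrow> real) \<Rightarrow> (('s, 'y) hist \<Rightarrow> 'b \<Rightarrow> real) \<Rightarrow> 'i \<Rightarrow> nat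
    \<Rightarrow> ('s, 'y) hist \<Rightarrow> real" where
  "eq_val u p \<delta> w \<sigma> i 0 h = w h"
| "eq_val u p \<delta> w \<sigma> i (Suc m) (l, s) =
     (1 - \<delta>) * exp_u u i (sym_prof (\<sigma> (l, s))) s
     + \<delta> * (\<Sum>(t, y)\<in>UNIV. exp_p p s (sym_prof (\<sigma> (l, s))) t y
                           * eq_val u p \<delta> w \<sigma> i m (l @ [(s, y)], t))"

text \<open>Continuation payoff of player i using an arbitrary behaviour strategy tau
  (depending on the public history and on own past actions), the others using sigma.\<close>
fun dev_val :: "('i::finite \<Rightarrow> ('i \<Rightarrow> 'b::finite) \<Rightarrow> 's::finite \<Rightarrow> real)
    \<Rightarrow> ('s \<Rightarrow> ('i \<Rightarrow> 'b) \<Rightarrow> 's \<Rightarrow> 'y::finite \<Rightarrow> real) \<Rightarrow> real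
    \<Rightarrow> (('s, 'y) hist \<Rightarrow> real) \<Rightarrow> (('s, 'y) hist \<Rightarrow> 'b \<Rightarrow> real) \<Rightarrow> 'i
    \<Rightarrow> (('s, 'y) hist \<Rightarrow> 'b list \<Rightarrow> 'b \<Rightarrow> real) \<Rightarrow> nat
    \<Rightarrow> ('s, 'y) hist \<Rightarrow> 'b list \<Rightarrow> real" where
  "dev_val u p \<delta> w \<sigma> i \<tau> 0 h acts = w h"
| "dev_val u p \<delta> w \<sigma> i \<tau> (Suc m) (l, s) acts =
     (\<Sum>b\<in>UNIV. \<tau> (l, s) acts b *
        ((1 - \<delta>) * exp_u u i (dev_prof i b (\<sigma> (l, s))) s
         + \<delta> * (\<Sum>(t, y)\<in>UNIV. exp_p p s (dev_prof i b (\<sigma> (l, s))) t y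
                   * dev_val u p \<delta> w \<sigma> i \<tau> m (l @ [(s, y)], t) (acts @ [b]))))"

definition starts_at :: "'s \<Rightarrow> ('s, 'y) hist \<Rightarrow> bool" where
  "starts_at s h = (case fst h of [] \<Rightarrow> snd h = s | (s1, _) # _ \<Rightarrow> s1 = s)"

definition is_SSE :: "('i::finite \<Rightarrow> ('i \<Rightarrow> 'b::finite) \<Rightarrow> 's::finite \<Rightarrow> real)
    \<Rightarrow> ('s \<Rightarrow> ('i \<Rightarrow> 'b) \<Rightarrow> 's \<Rightarrow> 'y::finite \<Rightarrow> real) \<Rightarrow> nat \<Rightarrow> 's
    \<Rightarrow> (('s, 'y) hist \<Rightarrow> real) \<Rightarrow> real \<Rightarrow> (('s, 'y) hist \<Rightarrow> 'b \<Rightarrow> real) \<Rightarrow> bool" where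
  "is_SSE u p n s w \<delta> \<sigma> \<longleftrightarrow>
     (\<forall>h. \<sigma> h \<in> mixed_actions) \<and>
     (\<forall>h i \<tau> acts. starts_at s h \<and> length (fst h) < n \<and> (\<forall>h' acts'. \<tau> h' acts' \<in> mixed_actions) \<longrightarrow>
        dev_val u p \<delta> w \<sigma> i \<tau> (n - 1 - length (fst h)) h acts
          \<le> eq_val u p \<delta> w \<sigma> i (n - 1 - length (fst h)) h)"

definition SSE_payoff :: "('i::finite \<Rightarrow> ('i \<Rightarrow> 'b::finite) \<Rightarrow> 's::finite \<Rightarrow> real)
    \<Rightarrow> ('s \<Rightarrow> ('i \<Rightarrow> 'b) \<Rightarrow> 's \<Rightarrow> 'y::finite \<Rightarrow> real) \<Rightarrow> nat \<Rightarrow> 's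
    \<Rightarrow> (('s, 'y) hist \<Rightarrow> real) \<Rightarrow> real \<Rightarrow> real \<Rightarrow> bool" where
  "SSE_payoff u p n s w \<delta> z \<longleftrightarrow>
     (\<exists>\<sigma>. is_SSE u p n s w \<delta> \<sigma> \<and> (\<forall>i. eq_val u p \<delta> w \<sigma> i (n - 1) ([], s) = z))"

end

theory Submission
  imports Defs "HOL-Combinatorics.Cycles"
begin

lemma mixed_prof_sum:
  fixes \<alpha>s :: "'i::finite \<Rightarrow> 'b::finite \<Rightarrow> real"
  assumes "\<forall>j. \<alpha>s j \<in> mixed_actions"
  shows "(\<Sum>a\<in>UNIV. prof_prob \<alpha>s a) = 1"
proof -
  have "(\<Sum>a\<in>UNIV. prof_prob \<alpha>s a) = (\<Sum>g\<in>PiE UNIV (\<lambda>_. UNIV). \<Prod>j\<in>UNIV. \<alpha>s j (g j))"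
    by (simp add: prof_prob_def PiE_UNIV_domain)
  also have "\<dots> = (\<Prod>j\<in>UNIV. \<Sum>b\<in>UNIV. \<alpha>s j b)"
    by (rule prod_sum_PiE[symmetric]) auto
  also have "\<dots> = 1" using assms by (simp add: mixed_actions_def)
  finally show ?thesis .
qed

lemma mixed_prof_nonneg:
  assumes "\<forall>j. \<alpha>s j \<in> mixed_actions"
  shows "prof_prob \<alpha>s a \<ge> 0"
  using assms unfolding prof_prob_def mixed_actions_def by (auto intro: prod_nonneg)

lemma sym_mixed: "\<alpha> \<in> mixed_actions \<Longrightarrow> \<forall>j. sym_prof \<alpha> j \<in> mixed_actions"
  by (simp add: sym_prof_def)

lemma dev_mixed: "\<alpha> \<in> mixed_actions \<Longrightarrow> \<forall>j. dev_prof i b \<alpha> j \<in> mixed_actions"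
  by (auto simp: dev_prof_def mixed_actions_def)

lemma exp_p_nonneg:
  assumes "sym_stoch_game u p" "\<forall>j. \<alpha>s j \<in> mixed_actions"
  shows "exp_p p s \<alpha>s t y \<ge> 0"
  using assms unfolding exp_p_def sym_stoch_game_def
  by (auto intro!: sum_nonneg mult_nonneg_nonneg mixed_prof_nonneg)

lemma exp_p_sum:
  assumes "sym_stoch_game u p" "\<forall>j. \<alpha>s j \<in> mixed_actions"
  shows "(\<Sum>(t, y)\<in>UNIV. exp_p p s \<alpha>s t y) = 1"
proof -
  have "(\<Sum>(t, y)\<in>UNIV. exp_p p s \<alpha>s t y) = (\<Sum>a\<in>UNIV. \<Sum>(t, y)\<in>UNIV. prof_prob \<alpha>s a * p s a t y)"
    unfolding exp_p_def split_def by (rule sum.swap)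
  also have "\<dots> = (\<Sum>a\<in>UNIV. prof_prob \<alpha>s a * (\<Sum>(t, y)\<in>UNIV. p s a t y))"
    by (simp add: sum_distrib_left split_def)
  also have "\<dots> = (\<Sum>a\<in>UNIV. prof_prob \<alpha>s a)"
    using assms(1) unfolding sym_stoch_game_def by simp
  also have "\<dots> = 1" using mixed_prof_sum[OF assms(2)] .
  finally show ?thesis .
qed


fun nxt :: "('s \<times> 'y) list \<Rightarrow> 's \<Rightarrow> 's" where
  "nxt [] t = t" | "nxt (e # _) t = fst e"

fun dsum :: "('s \<Rightarrow> 's \<Rightarrow> 'y \<Rightarrow> real) \<Rightarrow> real \<Rightarrow> ('s \<times> 'y) list \<Rightarrow> 's \<Rightarrow> real" where
  "dsum g d [] t = 0"
| "dsum g d ((s, y) # r) t = g s (nxt r t) y + d * dsum g d r t"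

lemma nxt_append: "nxt (A @ B) t = nxt A (nxt B t)"
  by (cases A) auto

lemma dsum_append1: "dsum g 1 (A @ B) t = dsum g 1 A (nxt B t) + dsum g 1 B t"
  by (induction A) (auto simp: nxt_append)

lemma dsum_scale: "dsum (\<lambda>s t y. c * g s t y) d l t = c * dsum g d l t"
  by (induction l) (auto simp: algebra_simps)

lemma dsum_abel:
  assumes "0 \<le> d" "d \<le> 1"
    and "\<forall>k\<le>length l. dsum g 1 (take k l) (nxt (drop k l) t) \<le> B"
  shows "dsum g d l t \<le> B"
  using assms(3)
proof (induction l arbitrary: B)
  case Nil
  then show ?case by auto
next
  case (Cons e r)
  obtain s y where e: "e = (s, y)" by (cases e)
  define a where "a = g s (nxt r t) y"
  have "dsum g 1 (take 1 (e # r)) (nxt (drop 1 (e # r)) t) \<le> B"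
    using Cons.prems by (metis One_nat_def Suc_le_mono le0 length_Cons)
  hence aB: "a \<le> B" by (simp add: e a_def)
  have "\<forall>k\<le>length r. dsum g 1 (take k r) (nxt (drop k r) t) \<le> B - a"
  proof (intro allI impI)
    fix k assume "k \<le> length r"
    hence "dsum g 1 (take (Suc k) (e # r)) (nxt (drop (Suc k) (e # r)) t) \<le> B"
      using Cons.prems by auto
    moreover have "nxt (take k r) (nxt (drop k r) t) = nxt r t"
      using nxt_append[of "take k r" "drop k r" t] by simp
    ultimately show "dsum g 1 (take k r) (nxt (drop k r) t) \<le> B - a"
      by (simp add: e a_def)
  qed
  hence IH: "dsum g d r t \<le> B - a" using Cons.IH by blast
  have "dsum g d (e # r) t = a + d * dsum g d r t" by (simp add: e a_def)
  also have "\<dots> \<le> a + d * (B - a)" using IH assms(1) by (simp add: mult_left_mono)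
  also have "\<dots> \<le> B"
  proof -
    have "(1 - d) * a \<le> (1 - d) * B" using aB assms(2) by (simp add: mult_left_mono)
    thus ?thesis by (simp add: algebra_simps)
  qed
  finally show ?case .
qed

lemma nd_decomp:
  "\<not> distinct (map f ws) \<Longrightarrow>
    \<exists>A e1 B e2 D. ws = A @ e1 # B @ e2 # D \<and> f e1 = f e2 \<and> distinct (map f (e1 # B))"
proof (induction ws)
  case Nil
  then show ?case by simp
next
  case (Cons w ws)
  show ?case
  proof (cases "distinct (map f ws)")
    case True
    with Cons.prems have "\<exists>e\<in>set ws. f e = f w" by auto
    then obtain B e2 D where ws: "ws = B @ e2 # D" and fe: "f e2 = f w"
      and nB: "\<forall>e\<in>set B. f e \<noteq> f w"
      by (rule split_list_first_propE)
    have "distinct (map f (w # B))" using True ws nB by auto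
    moreover have "w # ws = [] @ w # B @ e2 # D" using ws by simp
    ultimately show ?thesis using fe by (metis)
  next
    case False
    then obtain A e1 B e2 D where "ws = A @ e1 # B @ e2 # D" "f e1 = f e2" "distinct (map f (e1 # B))"
      using Cons.IH by blast
    then show ?thesis by (intro exI[of _ "w # A"]) auto
  qed
qed

lemma dsum_zip:
  "dsum g 1 C t = sum_list (map (\<lambda>(e, t'). g (fst e) t' (snd e)) (zip C (map fst (tl C) @ [t])))"
proof (induction C)
  case Nil
  then show ?case by simp
next
  case (Cons e r)
  then show ?case by (cases e; cases r) auto
qed

lemma map2_same: "map (\<lambda>(e, t'). h e t') (zip C (map f C)) = map (\<lambda>e. h e (f e)) C"
  by (induction C) auto

lemma cycle_sum:
  assumes cyc: "\<forall>T \<xi> (\<psi> :: 's \<Rightarrow> 'y). \<xi> permutes T \<longrightarrow> (\<Sum>s\<in>T. g s (\<xi> s) (\<psi> s)) \<le> 0"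
    and dist: "distinct (map fst (e1 # B))"
  shows "dsum g 1 (e1 # B) (fst e1) \<le> 0"
proof -
  define C where "C = e1 # B"
  define cs where "cs = map fst C"
  define \<xi> where "\<xi> = cycle_of_list cs"
  define \<psi> where "\<psi> = (\<lambda>s. the (map_of C s))"
  have dC: "distinct cs" using dist by (simp add: cs_def C_def)
  have rot: "map \<xi> cs = rotate1 cs"
    using cyclic_rotation[OF dC, of 1] by (simp add: \<xi>_def)
  have "map fst (tl C) @ [fst e1] = rotate1 cs" by (simp add: C_def cs_def)
  also have "\<dots> = map (\<xi> \<circ> fst) C" using rot by (simp add: cs_def)
  finally have nx: "map fst (tl C) @ [fst e1] = map (\<xi> \<circ> fst) C" .
  have "dsum g 1 C (fst e1) = sum_list (map (\<lambda>e. g (fst e) (\<xi> (fst e)) (snd e)) C)"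
    unfolding dsum_zip nx using map2_same[of "\<lambda>e t'. g (fst e) t' (snd e)" C "\<xi> \<circ> fst"]
    by (simp add: split_def)
  also have "\<dots> = sum_list (map (\<lambda>e. g (fst e) (\<xi> (fst e)) (\<psi> (fst e))) C)"
  proof (rule arg_cong[where f = sum_list], rule map_cong[OF refl])
    fix e assume "e \<in> set C"
    hence "map_of C (fst e) = Some (snd e)" using dist map_of_is_SomeI[of C "fst e" "snd e"] by (simp add: C_def)
    thus "g (fst e) (\<xi> (fst e)) (snd e) = g (fst e) (\<xi> (fst e)) (\<psi> (fst e))"
      by (simp add: \<psi>_def)
  qed
  also have "\<dots> = sum_list (map (\<lambda>s. g s (\<xi> s) (\<psi> s)) cs)"
    by (simp add: cs_def o_def)
  also have "\<dots> = (\<Sum>s\<in>set cs. g s (\<xi> s) (\<psi> s))"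
    using dC by (simp add: sum_list_distinct_conv_sum_set)
  also have "\<dots> \<le> 0" using cyc cycle_permutes[of cs] by (simp add: \<xi>_def)
  finally show ?thesis by (simp add: C_def)
qed

lemma dsum_len: "(\<forall>s t y. g s t y \<le> K) \<Longrightarrow> dsum g 1 l t \<le> real (length l) * K"
proof (induction l)
  case Nil
  then show ?case by simp
next
  case (Cons e r)
  obtain s y where e: "e = (s, y)" by (cases e)
  have "g s (nxt r t) y \<le> K" using Cons.prems by blast
  moreover have "dsum g 1 (e # r) t = g s (nxt r t) y + dsum g 1 r t" by (simp add: e)
  moreover have "dsum g 1 r t \<le> real (length r) * K" using Cons by blast
  ultimately show ?case by (simp add: algebra_simps)
qed

lemma walk_bound:
  fixes g :: "'s::finite \<Rightarrow> 's \<Rightarrow> 'y \<Rightarrow> real"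
  assumes cyc: "\<forall>T \<xi> (\<psi> :: 's \<Rightarrow> 'y). \<xi> permutes T \<longrightarrow> (\<Sum>s\<in>T. g s (\<xi> s) (\<psi> s)) \<le> 0"
    and bnd: "\<forall>s t y. g s t y \<le> K" and K: "0 \<le> K"
  shows "dsum g 1 l t \<le> K * real CARD('s)"
proof (induction l rule: length_induct)
  case (1 l)
  show ?case
  proof (cases "distinct (map fst l)")
    case True
    have "card (set (map fst l)) = length (map fst l)" by (rule distinct_card[OF True])
    hence "length l = card (set (map fst l))" by simp
    also have "\<dots> \<le> CARD('s)" by (rule card_mono) auto
    finally have "real (length l) \<le> real CARD('s)" by simp
    hence "real (length l) * K \<le> real CARD('s) * K" using K by (simp add: mult_right_mono)
    then show ?thesis using dsum_len[OF bnd, of l t] by (simp add: mult.commute)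
  next
    case False
    then obtain A e1 B e2 D where l: "l = A @ e1 # B @ e2 # D" and fe: "fst e1 = fst e2"
      and dd: "distinct (map fst (e1 # B))"
      using nd_decomp by blast
    have "dsum g 1 l t = dsum g 1 A (fst e1) + dsum g 1 (e1 # B) (fst e1) + dsum g 1 (e2 # D) t"
      unfolding l using dsum_append1[of g A "e1 # B @ e2 # D" t]
        dsum_append1[of g "e1 # B" "e2 # D" t] fe by simp
    also have "\<dots> \<le> dsum g 1 A (fst e2) + dsum g 1 (e2 # D) t"
      using cycle_sum[OF cyc dd] fe by simp
    also have "\<dots> = dsum g 1 (A @ e2 # D) t" using dsum_append1[of g A "e2 # D" t] by simp
    also have "\<dots> \<le> K * real CARD('s)"
      using "1.IH" l by auto
    finally show ?thesis .
  qed
qed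


fun Vf :: "real \<Rightarrow> real \<Rightarrow> ('s \<Rightarrow> 's \<Rightarrow> 'y \<Rightarrow> real) \<Rightarrow> real \<Rightarrow> ('s \<times> 'y) list \<Rightarrow> 's \<Rightarrow> real" where
  "Vf d v x z [] t = z"
| "Vf d v x z ((s, y) # r) t = Vf d v x ((z - (1 - d) * v) / d + (1 - d) / d * x s (nxt r t) y) r t"

lemma Vf_append:
  "Vf d v x z (l @ [(s, y)]) t = (Vf d v x z l s - (1 - d) * v) / d + (1 - d) / d * x s t y"
proof (induction l arbitrary: z)
  case Nil
  then show ?case by simp
next
  case (Cons e r)
  obtain s' y' where e: "e = (s', y')" by (cases e)
  have "nxt (r @ [(s, y)]) t = nxt r s" by (cases r) auto
  then show ?case using Cons by (simp add: e)
qed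

lemma lin_sum2:
  fixes P X :: "'a \<Rightarrow> 'b \<Rightarrow> real"
  shows "(\<Sum>(t, y)\<in>A. P t y * (c + k * X t y)) = c * (\<Sum>(t, y)\<in>A. P t y) + k * (\<Sum>(t, y)\<in>A. X t y * P t y)"
proof -
  have "(\<Sum>(t, y)\<in>A. P t y * (c + k * X t y)) = (\<Sum>(t, y)\<in>A. c * P t y + k * (X t y * P t y))"
    by (rule sum.cong) (auto simp: algebra_simps)
  also have "\<dots> = c * (\<Sum>(t, y)\<in>A. P t y) + k * (\<Sum>(t, y)\<in>A. X t y * P t y)"
    unfolding split_def by (simp add: sum.distrib sum_distrib_left)
  finally show ?thesis .
qed

lemma Vf_closed:
  assumes "d \<noteq> 0"
  shows "d ^ length l * (Vf d v x z l t - v) = (z - v) + (1 - d) * dsum x d l t"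
  using assms
proof (induction l arbitrary: z)
  case Nil
  then show ?case by simp
next
  case (Cons e r)
  obtain s y where e: "e = (s, y)" by (cases e)
  define z1 where "z1 = (z - (1 - d) * v) / d + (1 - d) / d * x s (nxt r t) y"
  have "d ^ length (e # r) * (Vf d v x z (e # r) t - v) = d * (d ^ length r * (Vf d v x z1 r t - v))"
    by (simp add: e z1_def)
  also have "\<dots> = d * ((z1 - v) + (1 - d) * dsum x d r t)" using Cons by simp
  also have "\<dots> = (z - v) + (1 - d) * dsum x d (e # r) t"
    using Cons.prems by (simp add: e z1_def field_simps)
  finally show ?case .
qed



lemma eq_val_V:
  assumes game: "sym_stoch_game u p" and feas: "PSS_feasible u p lam v \<alpha> x" and d: "0 < \<delta>"
  shows "eq_val u p \<delta> (\<lambda>h. Vf \<delta> v x z (fst h) (snd h)) (\<lambda>h. \<alpha> (snd h)) i m (l, s) = Vf \<delta> v x z l s"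
proof (induction m arbitrary: l s)
  case 0
  then show ?case by simp
next
  case (Suc m)
  define U where "U = exp_u u i (sym_prof (\<alpha> s)) s"
  define P where "P = (\<lambda>t y. exp_p p s (sym_prof (\<alpha> s)) t y)"
  define V where "V = Vf \<delta> v x z l s"
  have "\<alpha> s \<in> mixed_actions" using feas by (simp add: PSS_feasible_def)
  hence mix: "\<forall>j. sym_prof (\<alpha> s) j \<in> mixed_actions" by (rule sym_mixed)
  have P1: "(\<Sum>(t, y)\<in>UNIV. P t y) = 1" unfolding P_def using exp_p_sum[OF game mix] .
  have fa: "v = U + (\<Sum>(t, y)\<in>UNIV. x s t y * P t y)"
  proof -
    have "\<forall>s i. v = exp_u u i (sym_prof (\<alpha> s)) s
                + (\<Sum>(t, y)\<in>UNIV. x s t y * exp_p p s (sym_prof (\<alpha> s)) t y)"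
      using feas by (simp add: PSS_feasible_def)
    thus ?thesis unfolding U_def P_def by blast
  qed
  have "eq_val u p \<delta> (\<lambda>h. Vf \<delta> v x z (fst h) (snd h)) (\<lambda>h. \<alpha> (snd h)) i (Suc m) (l, s)
      = (1 - \<delta>) * U + \<delta> * (\<Sum>(t, y)\<in>UNIV. P t y * ((V - (1 - \<delta>) * v) / \<delta> + (1 - \<delta>) / \<delta> * x s t y))"
  proof -
    have "eq_val u p \<delta> (\<lambda>h. Vf \<delta> v x z (fst h) (snd h)) (\<lambda>h. \<alpha> (snd h)) i (Suc m) (l, s)
      = (1 - \<delta>) * U + \<delta> * (\<Sum>(t, y)\<in>UNIV. P t y * eq_val u p \<delta> (\<lambda>h. Vf \<delta> v x z (fst h) (snd h)) (\<lambda>h. \<alpha> (snd h)) i m (l @ [(s, y)], t))"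
      by (simp only: eq_val.simps U_def P_def snd_conv fst_conv)
    also have "(\<Sum>(t, y)\<in>UNIV. P t y * eq_val u p \<delta> (\<lambda>h. Vf \<delta> v x z (fst h) (snd h)) (\<lambda>h. \<alpha> (snd h)) i m (l @ [(s, y)], t))
       = (\<Sum>(t, y)\<in>UNIV. P t y * ((V - (1 - \<delta>) * v) / \<delta> + (1 - \<delta>) / \<delta> * x s t y))"
      by (rule sum.cong[OF refl]) (clarify, simp only: Suc.IH Vf_append V_def)
    finally show ?thesis .
  qed
  also have "\<dots> = (1 - \<delta>) * U + \<delta> * ((V - (1 - \<delta>) * v) / \<delta> + (1 - \<delta>) / \<delta> * (\<Sum>(t, y)\<in>UNIV. x s t y * P t y))"
    unfolding lin_sum2 P1 by simp
  also have "\<dots> = V" using d fa by (simp add: field_simps)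
  finally show ?case by (simp add: V_def)
qed



lemma dev_le:
  assumes game: "sym_stoch_game u p" and feas: "PSS_feasible u p lam v \<alpha> x"
    and d: "0 < \<delta>" "\<delta> \<le> 1" and tau: "\<forall>h acts. \<tau> h acts \<in> mixed_actions"
  shows "dev_val u p \<delta> (\<lambda>h. Vf \<delta> v x z (fst h) (snd h)) (\<lambda>h. \<alpha> (snd h)) i \<tau> m (l, s) acts
         \<le> Vf \<delta> v x z l s"
proof (induction m arbitrary: l s acts)
  case 0
  then show ?case by simp
next
  case (Suc m)
  define V where "V = Vf \<delta> v x z l s"
  define U where "U = (\<lambda>b. exp_u u i (dev_prof i b (\<alpha> s)) s)"
  define P where "P = (\<lambda>b t y. exp_p p s (dev_prof i b (\<alpha> s)) t y)"
  define W where "W = (\<lambda>h. Vf \<delta> v x z (fst h) (snd h))"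
  define c where "c = (V - (1 - \<delta>) * v) / \<delta>"
  have key: "(1 - \<delta>) * U b + \<delta> * (\<Sum>(t, y)\<in>UNIV. P b t y *
        dev_val u p \<delta> W (\<lambda>h. \<alpha> (snd h)) i \<tau> m (l @ [(s, y)], t) (acts @ [b])) \<le> V" for b
  proof -
    have "\<alpha> s \<in> mixed_actions" using feas by (simp add: PSS_feasible_def)
    hence mix: "\<forall>j. dev_prof i b (\<alpha> s) j \<in> mixed_actions" by (rule dev_mixed)
    have P1: "(\<Sum>(t, y)\<in>UNIV. P b t y) = 1" unfolding P_def using exp_p_sum[OF game mix] .
    have Pn: "P b t y \<ge> 0" for t y unfolding P_def using exp_p_nonneg[OF game mix] .
    have fb: "v \<ge> U b + (\<Sum>(t, y)\<in>UNIV. x s t y * P b t y)"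
    proof -
      have "\<forall>s i b. v \<ge> exp_u u i (dev_prof i b (\<alpha> s)) s
                + (\<Sum>(t, y)\<in>UNIV. x s t y * exp_p p s (dev_prof i b (\<alpha> s)) t y)"
        using feas by (simp add: PSS_feasible_def)
      thus ?thesis unfolding U_def P_def by blast
    qed
    have "(\<Sum>(t, y)\<in>UNIV. P b t y * dev_val u p \<delta> W (\<lambda>h. \<alpha> (snd h)) i \<tau> m (l @ [(s, y)], t) (acts @ [b]))
        \<le> (\<Sum>(t, y)\<in>UNIV. P b t y * (c + (1 - \<delta>) / \<delta> * x s t y))"
    proof (rule sum_mono, clarify)
      fix t y
      have "dev_val u p \<delta> W (\<lambda>h. \<alpha> (snd h)) i \<tau> m (l @ [(s, y)], t) (acts @ [b])
          \<le> Vf \<delta> v x z (l @ [(s, y)]) t" using Suc.IH unfolding W_def by blast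
      also have "\<dots> = c + (1 - \<delta>) / \<delta> * x s t y" by (simp add: Vf_append c_def V_def)
      finally show "P b t y * dev_val u p \<delta> W (\<lambda>h. \<alpha> (snd h)) i \<tau> m (l @ [(s, y)], t) (acts @ [b])
          \<le> P b t y * (c + (1 - \<delta>) / \<delta> * x s t y)" using Pn by (simp add: mult_left_mono)
    qed
    also have "\<dots> = c + (1 - \<delta>) / \<delta> * (\<Sum>(t, y)\<in>UNIV. x s t y * P b t y)"
      unfolding lin_sum2 P1 by simp
    finally have le: "(\<Sum>(t, y)\<in>UNIV. P b t y * dev_val u p \<delta> W (\<lambda>h. \<alpha> (snd h)) i \<tau> m (l @ [(s, y)], t) (acts @ [b]))
        \<le> c + (1 - \<delta>) / \<delta> * (\<Sum>(t, y)\<in>UNIV. x s t y * P b t y)" .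
    have "(1 - \<delta>) * U b + \<delta> * (\<Sum>(t, y)\<in>UNIV. P b t y *
        dev_val u p \<delta> W (\<lambda>h. \<alpha> (snd h)) i \<tau> m (l @ [(s, y)], t) (acts @ [b]))
        \<le> (1 - \<delta>) * U b + \<delta> * (c + (1 - \<delta>) / \<delta> * (\<Sum>(t, y)\<in>UNIV. x s t y * P b t y))"
      using le d by (simp add: mult_left_mono)
    also have "\<dots> = (1 - \<delta>) * (U b + (\<Sum>(t, y)\<in>UNIV. x s t y * P b t y)) + (V - (1 - \<delta>) * v)"
      using d by (simp add: c_def field_simps)
    also have "\<dots> \<le> (1 - \<delta>) * v + (V - (1 - \<delta>) * v)"
      using fb d by (simp add: mult_left_mono)
    finally show ?thesis by simp
  qed
  have tm: "\<tau> (l, s) acts \<in> mixed_actions" using tau by blast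
  have "dev_val u p \<delta> W (\<lambda>h. \<alpha> (snd h)) i \<tau> (Suc m) (l, s) acts
      = (\<Sum>b\<in>UNIV. \<tau> (l, s) acts b * ((1 - \<delta>) * U b + \<delta> * (\<Sum>(t, y)\<in>UNIV. P b t y *
        dev_val u p \<delta> W (\<lambda>h. \<alpha> (snd h)) i \<tau> m (l @ [(s, y)], t) (acts @ [b]))))"
    by (simp only: dev_val.simps U_def P_def W_def snd_conv fst_conv)
  also have "\<dots> \<le> (\<Sum>b\<in>UNIV. \<tau> (l, s) acts b * V)"
    using tm key by (intro sum_mono mult_left_mono) (auto simp: mixed_actions_def)
  also have "\<dots> = V" using tm by (simp add: sum_distrib_right[symmetric] mixed_actions_def)
  finally show ?case by (simp add: W_def V_def)
qed



theorem mainTheorem3: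
  fixes u :: "'i::finite \<Rightarrow> ('i \<Rightarrow> 'b::finite) \<Rightarrow> 's::finite \<Rightarrow> real"
    and p :: "'s \<Rightarrow> ('i \<Rightarrow> 'b) \<Rightarrow> 's \<Rightarrow> 'y::finite \<Rightarrow> real"
    and zlo zhi \<epsilon>0 \<kappa>0 \<delta>bar :: real and n :: nat
    and v :: "real \<Rightarrow> real"
    and \<alpha> :: "real \<Rightarrow> 's \<Rightarrow> 'b \<Rightarrow> real"
    and x :: "real \<Rightarrow> 's \<Rightarrow> 's \<Rightarrow> 'y \<Rightarrow> real"
  assumes game: "sym_stoch_game u p"
    and zlt: "zlo < zhi"
    and kminus: "- kSS u p (-1) < ereal zlo"
    and kplus: "ereal zhi < kSS u p 1"
    and eps0: "\<epsilon>0 > 0"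
    and feas: "\<forall>lam\<in>{-1, 1}. PSS_feasible u p lam (v lam) (\<alpha> lam) (x lam)"
    and sep: "\<forall>z\<in>{zlo..zhi}. v (-1) + \<epsilon>0 < z \<and> z < v 1 - \<epsilon>0"
    and kappa: "\<kappa>0 = max (Max {\<bar>x lam s t y\<bar> | lam s t y. lam \<in> {-1, 1}})
                           (Sup {\<bar>z - v lam\<bar> | lam z. lam \<in> {-1, 1} \<and> z \<in> {zlo..zhi}})"
    and nbig: "\<epsilon>0 * (real n - 1) / 2 - 2 * \<kappa>0 * real CARD('s) > 0"
    and dbar: "\<delta>bar < 1"
    and dbar_prop: "\<forall>\<delta>. \<delta>bar \<le> \<delta> \<and> 0 < \<delta> \<and> \<delta> < 1 \<longrightarrow>
                       (real n / 2)^2 * (1 - \<delta>) \<le> real CARD('s) \<and>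
                       1 - \<delta>^(n - 1) \<ge> (real n - 1) * (1 - \<delta>) / 2"
  shows "\<forall>lam\<in>{-1, 1}. \<forall>z\<in>{zlo..zhi}. \<forall>\<delta>. \<delta>bar \<le> \<delta> \<and> 0 < \<delta> \<and> \<delta> < 1 \<longrightarrow>
           (\<exists>w :: ('s, 'y) hist \<Rightarrow> real.
              (\<forall>s. SSE_payoff u p n s w \<delta> z) \<and>
              (\<forall>h. length (fst h) = n - 1 \<longrightarrow> lam * w h < lam * z))"
proof (intro ballI allI impI)
  fix lam z \<delta> :: real
  assume lam: "lam \<in> {-1, 1}" and zZ: "z \<in> {zlo..zhi}" and dd: "\<delta>bar \<le> \<delta> \<and> 0 < \<delta> \<and> \<delta> < 1"
  define V where "V = v lam"
  define A where "A = \<alpha> lam"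
  define X where "X = x lam"
  have fe: "PSS_feasible u p lam V A X" using feas lam by (auto simp: V_def A_def X_def)
  have d0: "0 < \<delta>" and d1: "\<delta> < 1" using dd by auto
  define w where "w = (\<lambda>h :: ('s, 'y) hist. Vf \<delta> V X z (fst h) (snd h))"
  define \<sigma> where "\<sigma> = (\<lambda>h :: ('s, 'y) hist. A (snd h))"
  have Amix: "\<forall>s. A s \<in> mixed_actions" using fe by (simp add: PSS_feasible_def)
  have eqv: "eq_val u p \<delta> w \<sigma> i m h = w h" for i m h
    using eq_val_V[OF game fe d0, of z i m "fst h" "snd h"] by (simp add: w_def \<sigma>_def)
  show "\<exists>w :: ('s, 'y) hist \<Rightarrow> real.
              (\<forall>s. SSE_payoff u p n s w \<delta> z) \<and>
              (\<forall>h. length (fst h) = n - 1 \<longrightarrow> lam * w h < lam * z)"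
  proof (intro exI[of _ w] conjI allI impI)
    fix s
    have "is_SSE u p n s w \<delta> \<sigma>"
      unfolding is_SSE_def
    proof (intro conjI allI impI)
      fix h :: "('s, 'y) hist" show "\<sigma> h \<in> mixed_actions" using Amix by (simp add: \<sigma>_def)
    next
      fix h :: "('s, 'y) hist" and i :: 'i and \<tau> :: "('s, 'y) hist \<Rightarrow> 'b list \<Rightarrow> 'b \<Rightarrow> real" and acts :: "'b list"
      assume "starts_at s h \<and> length (fst h) < n \<and> (\<forall>h' acts'. \<tau> h' acts' \<in> mixed_actions)"
      hence tau: "\<forall>h' acts'. \<tau> h' acts' \<in> mixed_actions" by blast
      have "dev_val u p \<delta> w \<sigma> i \<tau> (n - 1 - length (fst h)) (fst h, snd h) acts \<le> w h"
        using dev_le[OF game fe d0 _ tau, of z i "n - 1 - length (fst h)" "fst h" "snd h" acts] d1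
        by (simp add: w_def \<sigma>_def)
      thus "dev_val u p \<delta> w \<sigma> i \<tau> (n - 1 - length (fst h)) h acts
          \<le> eq_val u p \<delta> w \<sigma> i (n - 1 - length (fst h)) h" by (simp add: eqv)
    qed
    moreover have "\<forall>i. eq_val u p \<delta> w \<sigma> i (n - 1) ([], s) = z"
    proof
      fix i
      have "eq_val u p \<delta> w \<sigma> i (n - 1) ([], s) = w ([], s)" by (rule eqv)
      thus "eq_val u p \<delta> w \<sigma> i (n - 1) ([], s) = z" by (simp add: w_def)
    qed
    ultimately show "SSE_payoff u p n s w \<delta> z" unfolding SSE_payoff_def by blast
  next
    fix h :: "('s, 'y) hist"
    assume len: "length (fst h) = n - 1"
    obtain l t where h: "h = (l, t)" by (cases h)
    define c where "c = real CARD('s)"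
    define M where "M = {\<bar>x lm s t y\<bar> | lm s t y. lm \<in> {-1, 1}}"
    have Meq: "M = (\<lambda>(lm, s, t, y). \<bar>x lm s t y\<bar>) ` ({-1, 1} \<times> UNIV)"
      unfolding M_def by (auto simp: image_iff) blast+
    have finM: "finite M" unfolding Meq by simp
    have kX: "\<bar>X s' t' y'\<bar> \<le> \<kappa>0" for s' t' y'
    proof -
      have "\<bar>X s' t' y'\<bar> \<in> M" unfolding M_def X_def using lam by blast
      hence "\<bar>X s' t' y'\<bar> \<le> Max M" using finM by (simp add: Max_ge)
      thus ?thesis using kappa M_def by simp
    qed
    have k0: "0 \<le> \<kappa>0" using kX[of undefined undefined undefined] by simp
    have c0: "0 \<le> c" by (simp add: c_def)
    have n2: "n \<ge> 2"
    proof (rule ccontr)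
      assume "\<not> n \<ge> 2"
      hence "real n - 1 \<le> 0" by simp
      hence "\<epsilon>0 * (real n - 1) / 2 \<le> 0" using eps0 by (simp add: mult_nonpos_nonneg mult_le_0_iff)
      moreover have "0 \<le> 2 * \<kappa>0 * real CARD('s)" using k0 by simp
      ultimately show False using nbig by linarith
    qed
    define G where "G = (\<lambda>s t y. lam * X s t y)"
    have lam1: "lam = -1 \<or> lam = 1" using lam by auto
    have Gb: "\<forall>s t y. G s t y \<le> \<kappa>0"
    proof (intro allI)
      fix s t y
      have "G s t y \<le> \<bar>X s t y\<bar>" using lam1 by (auto simp: G_def)
      thus "G s t y \<le> \<kappa>0" using kX[of s t y] by linarith
    qed
    have cyc: "\<forall>T \<xi> (\<psi> :: 's \<Rightarrow> 'y). \<xi> permutes T \<longrightarrow> (\<Sum>s\<in>T. G s (\<xi> s) (\<psi> s)) \<le> 0"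
    proof (intro allI impI)
      fix T :: "'s set" and \<xi> :: "'s \<Rightarrow> 's" and \<psi> :: "'s \<Rightarrow> 'y" assume "\<xi> permutes T"
      moreover have "\<forall>T \<xi> (\<psi> :: 's \<Rightarrow> 'y). \<xi> permutes T \<longrightarrow> lam * (\<Sum>s\<in>T. X s (\<xi> s) (\<psi> s)) \<le> 0"
        using fe by (simp add: PSS_feasible_def)
      ultimately show "(\<Sum>s\<in>T. G s (\<xi> s) (\<psi> s)) \<le> 0" by (simp add: G_def sum_distrib_left)
    qed
    have pref: "\<forall>k\<le>length l. dsum G 1 (take k l) (nxt (drop k l) t) \<le> \<kappa>0 * c"
      using walk_bound[OF cyc Gb k0] by (simp add: c_def)
    have Sb: "dsum G \<delta> l t \<le> \<kappa>0 * c" using dsum_abel[OF _ _ pref] d0 d1 by simp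
    have Seq: "dsum G \<delta> l t = lam * dsum X \<delta> l t" unfolding G_def by (rule dsum_scale)
    define L where "L = n - 1"
    have lenl: "length l = L" using len h by (simp add: L_def)
    have cl: "\<delta> ^ L * (Vf \<delta> V X z l t - V) = (z - V) + (1 - \<delta>) * dsum X \<delta> l t"
      using Vf_closed[of \<delta> l V X z t] d0 lenl by simp
    define D where "D = lam * (V - z)"
    have Dg: "D > \<epsilon>0"
    proof -
      have "v (-1) + \<epsilon>0 < z \<and> z < v 1 - \<epsilon>0" using sep zZ by blast
      thus ?thesis using lam1 by (auto simp: D_def V_def)
    qed
    have hp: "1 - \<delta> ^ L \<ge> (real n - 1) * (1 - \<delta>) / 2" using dbar_prop dd by (simp add: L_def)
    have nb: "2 * \<kappa>0 * c < \<epsilon>0 * (real n - 1) / 2" using nbig by (simp add: c_def)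
    have rn: "real n - 1 \<ge> 1" using n2 by simp
    have hp0: "1 - \<delta> ^ L > 0"
    proof -
      have "(real n - 1) * (1 - \<delta>) / 2 > 0" using rn d1 by simp
      thus ?thesis using hp by linarith
    qed
    define Wv where "Wv = Vf \<delta> V X z l t"
    have E: "\<delta> ^ L * (lam * Wv - lam * z) = (1 - \<delta>) * dsum G \<delta> l t - (1 - \<delta> ^ L) * D"
    proof -
      have "\<delta> ^ L * (lam * Wv - lam * z) = lam * (\<delta> ^ L * (Wv - V)) + \<delta> ^ L * D"
        by (simp add: D_def algebra_simps)
      also have "\<dots> = lam * (z - V) + (1 - \<delta>) * dsum G \<delta> l t + \<delta> ^ L * D"
        unfolding Wv_def cl Seq by (simp add: algebra_simps)
      also have "\<dots> = (1 - \<delta>) * dsum G \<delta> l t - (1 - \<delta> ^ L) * D"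
        by (simp add: D_def algebra_simps)
      finally show ?thesis .
    qed
    have e1: "(1 - \<delta>) * dsum G \<delta> l t \<le> (1 - \<delta>) * (\<kappa>0 * c)"
      using Sb d1 by (simp add: mult_left_mono)
    have e2: "(1 - \<delta>) * (\<kappa>0 * c) \<le> (1 - \<delta>) * (\<epsilon>0 * (real n - 1) / 2)"
    proof -
      have "\<kappa>0 * c \<le> \<epsilon>0 * (real n - 1) / 2" 
      proof -
        have "0 \<le> \<kappa>0 * c" using k0 c0 by simp
        thus ?thesis using nb by linarith
      qed
      thus ?thesis using d1 by (simp add: mult_left_mono)
    qed
    have e3: "(1 - \<delta>) * (\<epsilon>0 * (real n - 1) / 2) \<le> (1 - \<delta> ^ L) * \<epsilon>0"
    proof -
      have "(real n - 1) * (1 - \<delta>) / 2 * \<epsilon>0 \<le> (1 - \<delta> ^ L) * \<epsilon>0"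
        using hp eps0 by (simp add: mult_right_mono)
      thus ?thesis by (simp add: algebra_simps)
    qed
    have e4: "(1 - \<delta> ^ L) * \<epsilon>0 < (1 - \<delta> ^ L) * D" using hp0 Dg by simp
    have "\<delta> ^ L * (lam * Wv - lam * z) < 0" using E e1 e2 e3 e4 by linarith
    moreover have "\<delta> ^ L > 0" using d0 by simp
    ultimately have "lam * Wv - lam * z < 0" using d0 by (simp add: mult_less_0_iff)
    thus "lam * w h < lam * z" by (simp add: w_def h Wv_def)
  qed
qed

end
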